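(* Let $0<q<1$, let $n\ge1$, and let $a_1,\dots,a_n,b_1,\dots,b_n$ be non-negative integers. Define the dual argument lists \[ \mathbf p = \big(a_1+2,\{1\}^{b_1},\,a_2+2,\{1\}^{b_2},\,\dots,\,a_n+2,\{1\}^{b_n}\big),\qquad \mathbf p' = \big(b_n+2,\{1\}^{a_n},\,b_{n-1}+2,\{1\}^{a_{n-1}},\,\dots,\,b_1+2,\{1\}^{a_1}\big). \] Then for every non-negative integer $m$, $Z[\mathbf p;m]=Z[\mathbf p';m]$.
   Context: Fix $0<q<1$. For real $x$, $[x]_q := (1-q^x)/(1-q)$. For positive integers $s_1,\dots,s_N$ with $s_1>1$, the multiple $q$-zeta value is $\zeta[s_1,\dots,s_N] := \sum_{k_1>\cdots>k_N>0}\prod_{j=1}^N q^{(s_j-1)k_j}/[k_j]_q^{s_j}$ (sum over positive integers). $\{1\}^b$ denotes $b$ consecutive copies of $1$ in an argument list (empty if $b=0$). For such $s_1,\dots,s_N$ and a non-negative integer $m$, define $Z[s_1,\dots,s_N;m] := \sum \zeta[s_1+c_1,\dots,s_N+c_N]$, the sum over all non-negative integers $c_1,\dots,c_N$ with $c_1+\cdots+c_N=m$. *)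

theory Defs
  imports "HOL-Analysis.Analysis"
begin

definition qnum :: "real \<Rightarrow> real \<Rightarrow> real" where
  "qnum q x = (1 - q powr x) / (1 - q)"

definition mzv_indices :: "nat \<Rightarrow> nat list set" where
  "mzv_indices N = {ks. length ks = N \<and> sorted_wrt (>) ks \<and> (\<forall>k\<in>set ks. 0 < k)}"

definition qzeta :: "real \<Rightarrow> nat list \<Rightarrow> real" where
  "qzeta q s = (\<Sum>\<^sub>\<infinity> ks \<in> mzv_indices (length s).
      \<Prod>j<length s. q powr (real (s ! j - 1) * real (ks ! j)) / (qnum q (real (ks ! j))) ^ (s ! j))"

definition qZ :: "real \<Rightarrow> nat list \<Rightarrow> nat \<Rightarrow> real" where
  "qZ q s m = (\<Sum>cs \<in> {cs. length cs = length s \<and> sum_list cs = m}.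
      qzeta q (map2 (+) s cs))"

definition dual_args :: "nat list \<Rightarrow> nat list \<Rightarrow> nat list" where
  "dual_args as bs = concat (map (\<lambda>(a, b). (a + 2) # replicate b 1) (zip as bs))"

end

theory Submission
  imports Defs
begin


lemma ennreal_suminf_swap:
  fixes f :: "nat \<Rightarrow> nat \<Rightarrow> ennreal"
  shows "(\<Sum>i. \<Sum>j. f i j) = (\<Sum>j. \<Sum>i. f i j)"
proof -
  have "(\<Sum>i. \<Sum>j. f i j) = (\<integral>\<^sup>+i. \<integral>\<^sup>+j. f i j \<partial>count_space UNIV \<partial>count_space UNIV)"
    by (simp add: nn_integral_count_space_nat)
  also have "\<dots> = (\<integral>\<^sup>+j. \<integral>\<^sup>+i. f i j \<partial>count_space UNIV \<partial>count_space UNIV)"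
    by (rule nn_integral_count_space_nn_integral) auto
  also have "\<dots> = (\<Sum>j. \<Sum>i. f i j)"
    by (simp add: nn_integral_count_space_nat)
  finally show ?thesis .
qed

lemma ennreal_suminf_fin:
  assumes "\<And>i. 0 \<le> f i"
  shows "(\<Sum>i. ennreal (if i < b then f i else 0)) = ennreal (\<Sum>i<b. f i)"
proof -
  have "(\<lambda>i. if i \<in> {..<b} then f i else 0) sums (\<Sum>i\<in>{..<b}. f i)"
    by (rule sums_If_finite_set) auto
  then have "(\<lambda>i. if i < b then f i else 0) sums (\<Sum>i<b. f i)" by simp
  then show ?thesis
    by (intro suminf_ennreal_eq) (auto simp: assms)
qed

locale cs =
  fixes q x :: real
  assumes q0: "0 < q" and q1: "q < 1" and x0: "0 \<le> x" and x1: "x \<le> 1"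
begin

definition qn :: "nat \<Rightarrow> real" where "qn k = (1 - q^k) / (1 - q)"
definition T :: "nat \<Rightarrow> real" where "T k = qn k - x * q^k"
definition P :: "nat \<Rightarrow> real" where "P k = q^k / qn k"
definition S :: "nat \<Rightarrow> real" where "S k = (if k = 0 then 0 else 1 / T k)"
definition Ew :: "nat \<Rightarrow> nat \<Rightarrow> real" where "Ew w k = P k ^ (w - 1) * S k"
definition F :: "nat \<Rightarrow> real" where "F m = (\<Prod>i\<in>{1..m}. T i)"
definition C :: "nat \<Rightarrow> nat \<Rightarrow> real" where "C m n = q^(m*n) * F m * F n / F (m+n)"

fun phi :: "nat list \<Rightarrow> nat \<Rightarrow> real" where
  "phi [] m = (if m = 0 then 1 else 0)"
| "phi (w # s) m = (if m = 0 then 0 else Ew w m * (\<Sum>m'<m. phi s m'))"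

definition Zc :: "nat list \<Rightarrow> nat list \<Rightarrow> ennreal" where
  "Zc s t = (\<Sum>m. \<Sum>n. ennreal (phi s m * C m n * phi t n))"

lemma qpow_le: "k \<ge> 1 \<Longrightarrow> q^k \<le> q"
  using power_decreasing[of 1 k q] q0 q1 by simp

lemma qn_ge1: "k \<ge> 1 \<Longrightarrow> qn k \<ge> 1"
  using qpow_le[of k] q1 by (simp add: qn_def)

lemma qn_le: "qn k \<le> 1 / (1 - q)"
  using q0 q1 by (simp add: qn_def divide_right_mono)

lemma qn_nonneg: "qn k \<ge> 0"
  using q0 q1 by (simp add: qn_def power_le_one)

lemma qn_add: "qn (a + n) = qn n + q^n * qn a"
  using q1 by (simp add: qn_def field_simps power_add)

lemma T_add: "T (a + n) = qn n + q^n * T a"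
  by (simp add: T_def qn_add algebra_simps power_add)

lemma T_ge: "k \<ge> 1 \<Longrightarrow> T k \<ge> 1 - q"
proof -
  assume k: "k \<ge> 1"
  have "x * q^k \<le> q^k" using x1 q0 by (simp add: mult_left_le_one_le)
  then show ?thesis using qn_ge1[OF k] qpow_le[OF k] by (simp add: T_def)
qed

lemma T_pos: "k \<ge> 1 \<Longrightarrow> T k > 0"
  using T_ge q1 by force

lemma T_le: "T k \<le> 1 / (1 - q)"
  using qn_le[of k] x0 q0 by (simp add: T_def) (smt (verit) mult_nonneg_nonneg zero_le_power)

lemma S_nonneg: "S k \<ge> 0"
  by (auto simp: S_def intro!: less_imp_le[OF T_pos])

lemma S_le: "S k \<le> 1 / (1 - q)"
proof (cases "k = 0")
  case True then show ?thesis using q1 by (simp add: S_def)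
next
  case False
  then have "T k \<ge> 1 - q" using T_ge by simp
  then show ?thesis using False q1 by (simp add: S_def frac_le)
qed

lemma P_nonneg: "P k \<ge> 0"
  using q0 qn_nonneg[of k] by (simp add: P_def)

lemma P_le: "P k \<le> q^k"
proof (cases "k = 0")
  case True then show ?thesis by (simp add: P_def qn_def)
next
  case False
  then have "qn k \<ge> 1" using qn_ge1 by simp
  then show ?thesis using q0 by (simp add: P_def divide_le_eq mult_le_cancel_left1)
qed

lemma P_le1: "P k \<le> 1"
  using P_le[of k] q0 q1 by (meson order_trans power_le_one less_imp_le)

lemma Ew_nonneg: "Ew w k \<ge> 0"
  by (simp add: Ew_def P_nonneg S_nonneg)

lemma Ew_Suc: "w \<ge> 1 \<Longrightarrow> Ew (Suc w) k = P k * Ew w k"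
  by (cases w) (auto simp: Ew_def)

lemma Ew_1: "Ew 1 k = S k"
  by (simp add: Ew_def)

lemma F_pos: "F m > 0"
  unfolding F_def by (rule prod_pos) (auto intro: T_pos)

lemma F_Suc: "F (Suc m) = F m * T (Suc m)"
  unfolding F_def by (simp add: atLeastAtMostSuc_conv mult.commute)

lemma F_0: "F 0 = 1"
  by (simp add: F_def)

lemma C_sym: "C m n = C n m"
  by (simp add: C_def mult.commute add.commute mult.left_commute)

lemma C_pos: "C m n > 0"
  using F_pos q0 by (simp add: C_def)

lemma C_m0: "C m 0 = 1"
  using F_pos[of m] by (simp add: C_def F_0)

lemma C_Suc: "C (Suc a) n * T (Suc a + n) = q^n * T (Suc a) * C a n"
proof -
  have "F (Suc a + n) = F (a + n) * T (Suc a + n)" using F_Suc[of "a+n"] by simp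
  moreover have "T (Suc a + n) > 0" using T_pos by simp
  ultimately show ?thesis
    using F_pos[of "a+n"] by (simp add: C_def F_Suc power_add field_simps)
qed

lemma C_tele: "n \<ge> 1 \<Longrightarrow> C (Suc a) n * S (Suc a) = P n * (C a n - C (Suc a) n)"
proof -
  assume n: "n \<ge> 1"
  have TS: "T (Suc a) > 0" using T_pos by simp
  have TSn: "T (Suc a + n) = qn n + q^n * T (Suc a)" using T_add[of "Suc a" n] by simp
  have qnp: "qn n > 0" using qn_ge1[OF n] by simp
  have "q^n * T (Suc a) * C a n = C (Suc a) n * (qn n + q^n * T (Suc a))"
    using C_Suc[of a n] TSn by simp
  then have "q^n * T (Suc a) * (C a n - C (Suc a) n) = C (Suc a) n * qn n"
    by (simp add: algebra_simps)
  then show ?thesis using TS qnp q0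
    by (simp add: S_def P_def field_simps)
qed

lemma C_decay: "n \<ge> 1 \<Longrightarrow> C (Suc a) n \<le> q * C a n"
proof -
  assume n: "n \<ge> 1"
  have TS: "T (Suc a) > 0" using T_pos by simp
  have TSn: "T (Suc a + n) = qn n + q^n * T (Suc a)" using T_add[of "Suc a" n] by simp
  have "T (Suc a) \<le> T (Suc a + n)"
  proof -
    have "(1 - q^n) * T (Suc a) \<le> (1 - q^n) * (1 / (1 - q))"
      using T_le[of "Suc a"] q0 q1 by (intro mult_left_mono) (auto simp: power_le_one)
    then show ?thesis using TSn q1 by (simp add: qn_def algebra_simps)
  qed
  then have "q^n * T (Suc a) * C a n \<le> q^n * T (Suc a + n) * C a n"
    using q0 C_pos[of a n] by (simp add: mult_right_mono)
  then have "C (Suc a) n * T (Suc a + n) \<le> q^n * C a n * T (Suc a + n)"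
    using C_Suc[of a n] by (simp add: algebra_simps)
  then have "C (Suc a) n \<le> q^n * C a n" using T_pos[of "Suc a + n"] by simp
  also have "\<dots> \<le> q * C a n" using qpow_le[OF n] C_pos[of a n] by (simp add: mult_right_mono)
  finally show ?thesis .
qed

lemma C_bound: "n \<ge> 1 \<Longrightarrow> C a n \<le> q^a"
proof (induction a)
  case 0 then show ?case using C_m0[of n] C_sym by simp
next
  case (Suc a)
  then show ?case using C_decay[of n a] q0 by (smt (verit) mult_left_mono power_Suc)
qed

lemma R2:
  assumes n: "n \<ge> 1"
  shows "(\<lambda>a. if m < a then C a n * S a else 0) sums (P n * C m n)"
proof -
  define h where "h a = P n * C (max a m) n" for a
  have h0: "h \<longlonglongrightarrow> 0"
  proof (rule Lim_null_comparison)
    show "\<forall>\<^sub>F a in sequentially. norm (h a) \<le> P n * q^a"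
    proof (intro always_eventually allI)
      fix a
      have "C (max a m) n \<le> q^(max a m)" using C_bound[OF n] .
      also have "\<dots> \<le> q^a" using q0 q1 by (intro power_decreasing) auto
      finally show "norm (h a) \<le> P n * q^a"
        using P_nonneg[of n] C_pos[of "max a m" n] by (simp add: h_def mult_left_mono)
    qed
    show "(\<lambda>a. P n * q^a) \<longlonglongrightarrow> 0"
      using q0 q1 by (intro tendsto_mult_right_zero LIMSEQ_power_zero) auto
  qed
  have "(\<lambda>a. h a - h (Suc a)) sums (h 0 - 0)"
    by (rule telescope_sums'[OF h0])
  moreover have "h a - h (Suc a) = (if m < Suc a then C (Suc a) n * S (Suc a) else 0)" for a
  proof (cases "a < m")
    case True then show ?thesis by (simp add: h_def max_def)
  next
    case False
    then have "h a - h (Suc a) = P n * (C a n - C (Suc a) n)"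
      by (simp add: h_def max_def right_diff_distrib)
    then show ?thesis using C_tele[OF n, of a] False by simp
  qed
  ultimately have "(\<lambda>a. (\<lambda>a. if m < a then C a n * S a else 0) (Suc a)) sums (P n * C m n)"
    by (simp add: h_def)
  then show ?thesis by (subst (asm) sums_Suc_iff) simp
qed

lemma R1:
  assumes m: "m \<ge> 1"
  shows "(\<lambda>b. if n < b then C m b * S b else 0) sums (P m * C m n)"
  using R2[OF m, of n] by (simp only: C_sym[of m])


lemma phi_nonneg: "phi s m \<ge> 0"
  by (induction s arbitrary: m) (auto simp: Ew_nonneg sum_nonneg)

lemma phi_1: "phi (1 # t) b = S b * (\<Sum>n<b. phi t n)"
  by (simp add: Ew_def S_def)

lemma Zc_sym: "Zc s t = Zc t s"
  unfolding Zc_def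
  by (subst ennreal_suminf_swap) (simp add: C_sym mult.commute mult.left_commute)

lemma L1:
  assumes w: "w \<ge> 1"
  shows "Zc (Suc w # s) t = Zc (w # s) (1 # t)"
proof -
  have key: "ennreal (phi (Suc w # s) m * C m n * phi t n)
     = (\<Sum>b. ennreal (if n < b then phi (w # s) m * phi t n * C m b * S b else 0))" for m n
  proof (cases "m = 0")
    case True
    have z1: "phi (w # s) m = 0" "phi (Suc w # s) m = 0" using True by simp_all
    show ?thesis by (simp add: z1 del: phi.simps cong: if_cong)
  next
    case False
    have e: "phi (Suc w # s) m = P m * phi (w # s) m"
      using False Ew_Suc[OF w] by simp
    define A where "A = phi (w # s) m"
    have "(\<lambda>b. A * phi t n * (if n < b then C m b * S b else 0))
        sums (A * phi t n * (P m * C m n))"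
      by (rule sums_mult[OF R1]) (use False in simp)
    moreover have "(\<lambda>b. A * phi t n * (if n < b then C m b * S b else 0))
        = (\<lambda>b. if n < b then A * phi t n * C m b * S b else 0)"
      by (auto simp: fun_eq_iff)
    moreover have "A * phi t n * (P m * C m n) = phi (Suc w # s) m * C m n * phi t n"
      unfolding e A_def by (simp only: ac_simps)
    ultimately have "(\<lambda>b. if n < b then phi (w # s) m * phi t n * C m b * S b else 0)
        sums (phi (Suc w # s) m * C m n * phi t n)"
      by (simp only: A_def)
    then show ?thesis
      by (intro suminf_ennreal_eq[symmetric])
         (auto simp del: phi.simps intro!: mult_nonneg_nonneg phi_nonneg S_nonneg less_imp_le[OF C_pos])
  qed
  have key2: "(\<Sum>n. ennreal (if n < b then phi (w # s) m * phi t n * C m b * S b else 0))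
      = ennreal (phi (w # s) m * C m b * phi (1 # t) b)" for m b
  proof -
    have "(\<Sum>n. ennreal (if n < b then phi (w # s) m * phi t n * C m b * S b else 0))
        = ennreal (\<Sum>n<b. phi (w # s) m * phi t n * C m b * S b)"
      by (rule ennreal_suminf_fin) (intro mult_nonneg_nonneg phi_nonneg S_nonneg less_imp_le[OF C_pos])
    also have "(\<Sum>n<b. phi (w # s) m * phi t n * C m b * S b) = phi (w # s) m * C m b * phi (1 # t) b"
      unfolding phi_1 by (simp add: sum_distrib_left sum_distrib_right mult.commute mult.left_commute del: phi.simps)
    finally show ?thesis .
  qed
  have "Zc (Suc w # s) t = (\<Sum>m. \<Sum>n. \<Sum>b. ennreal (if n < b then phi (w # s) m * phi t n * C m b * S b else 0))"
    unfolding Zc_def by (simp only: key)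
  also have "\<dots> = (\<Sum>m. \<Sum>b. \<Sum>n. ennreal (if n < b then phi (w # s) m * phi t n * C m b * S b else 0))"
    by (subst ennreal_suminf_swap) (rule refl)
  also have "\<dots> = Zc (w # s) (1 # t)"
    unfolding Zc_def by (simp only: key2)
  finally show ?thesis .
qed

lemma L2:
  assumes c: "c \<ge> 1"
  shows "Zc (1 # s) (c # t) = Zc s (Suc c # t)"
  using L1[OF c, of t s] Zc_sym by metis

lemma ones: "c \<ge> 1 \<Longrightarrow> Zc (replicate b 1 @ s) (c # t) = Zc s ((c + b) # t)"
proof (induction b arbitrary: c)
  case 0 then show ?case by simp
next
  case (Suc b)
  have "Zc (replicate (Suc b) 1 @ s) (c # t) = Zc (replicate b 1 @ s) (Suc c # t)"
    using L2[OF Suc.prems, of "replicate b 1 @ s" t] by simp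
  also have "\<dots> = Zc s ((c + Suc b) # t)"
    using Suc.IH[of "Suc c"] by simp
  finally show ?case .
qed

lemma down: "k \<ge> 1 \<Longrightarrow> Zc (Suc k # s) t = Zc (1 # s) (replicate k 1 @ t)"
proof (induction k arbitrary: t)
  case 0 then show ?case by simp
next
  case (Suc k)
  show ?case
  proof (cases "k = 0")
    case True then show ?thesis using L1[of 1 s t] by simp
  next
    case False
    have "Zc (Suc (Suc k) # s) t = Zc (Suc k # s) (1 # t)" using L1[of "Suc k" s t] by simp
    also have "\<dots> = Zc (1 # s) (replicate k 1 @ 1 # t)" using Suc.IH[of "1 # t"] False by simp
    also have "replicate k 1 @ 1 # t = replicate (Suc k) 1 @ t"
      by (simp add: replicate_app_Cons_same)
    finally show ?thesis by simp
  qed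
qed

lemma block: "Zc (((a + 2) # replicate b 1) @ s) t = Zc s (((b + 2) # replicate a 1) @ t)"
proof -
  have "Zc (((a + 2) # replicate b 1) @ s) t = Zc (Suc (Suc a) # (replicate b 1 @ s)) t" by simp
  also have "\<dots> = Zc (1 # (replicate b 1 @ s)) (replicate (Suc a) 1 @ t)"
    by (rule down) simp
  also have "\<dots> = Zc (replicate (Suc b) 1 @ s) (1 # (replicate a 1 @ t))" by simp
  also have "\<dots> = Zc s ((1 + Suc b) # (replicate a 1 @ t))" by (rule ones) simp
  finally show ?thesis by simp
qed

lemma dual_args_snoc:
  "length as = length bs \<Longrightarrow>
   dual_args (as @ [a]) (bs @ [b]) = dual_args as bs @ ((a + 2) # replicate b 1)"
  by (simp add: dual_args_def)

lemma dual_Zc: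
  "length as = length bs \<Longrightarrow>
   Zc (dual_args as bs @ s) t = Zc s (dual_args (rev bs) (rev as) @ t)"
proof (induction as arbitrary: bs s t)
  case Nil then show ?case by (simp add: dual_args_def)
next
  case (Cons a as)
  then obtain b bs' where bs: "bs = b # bs'" and len: "length as = length bs'"
    by (cases bs) auto
  have "Zc (dual_args (a # as) bs @ s) t = Zc (((a + 2) # replicate b 1) @ (dual_args as bs' @ s)) t"
    by (simp add: bs dual_args_def)
  also have "\<dots> = Zc (dual_args as bs' @ s) (((b + 2) # replicate a 1) @ t)"
    by (rule block)
  also have "\<dots> = Zc s (dual_args (rev bs') (rev as) @ ((b + 2) # replicate a 1) @ t)"
    by (rule Cons.IH[OF len])
  also have "dual_args (rev bs') (rev as) @ ((b + 2) # replicate a 1) @ t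
      = dual_args (rev bs) (rev (a # as)) @ t"
    using dual_args_snoc[of "rev bs'" "rev as" b a] len by (simp add: bs)
  finally show ?case .
qed

lemma Zc_nil: "Zc s [] = (\<Sum>m. ennreal (phi s m))"
proof -
  have "(\<Sum>n. ennreal (phi s m * C m n * phi [] n)) = ennreal (phi s m)" for m
  proof -
    have "(\<lambda>n. if n = 0 then phi s m * C m n else 0) sums (phi s m * C m 0)"
      by (rule sums_single)
    then have "(\<lambda>n. phi s m * C m n * phi [] n) sums (phi s m)"
      by (simp add: C_m0 if_distrib cong: if_cong)
    then show ?thesis
      by (intro suminf_ennreal_eq) (auto simp: phi_nonneg less_imp_le[OF C_pos])
  qed
  then show ?thesis unfolding Zc_def by simp
qed

theorem Gen_dual:
  assumes "length as = length bs"
  shows "(\<Sum>m. ennreal (phi (dual_args as bs) m)) = (\<Sum>m. ennreal (phi (dual_args (rev bs) (rev as)) m))"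
  using dual_Zc[OF assms, of "[]" "[]"] Zc_sym[of "[]"] by (simp add: Zc_nil)

end



definition hd0 :: "nat list \<Rightarrow> nat" where "hd0 ks = (case ks of [] \<Rightarrow> 0 | k # _ \<Rightarrow> k)"
definition Dm :: "nat \<Rightarrow> nat \<Rightarrow> nat list set" where "Dm N m = {ks \<in> mzv_indices N. hd0 ks = m}"
definition prodt :: "real \<Rightarrow> nat list \<Rightarrow> nat list \<Rightarrow> real" where
  "prodt q s ks = (\<Prod>j<length s. q powr (real (s ! j - 1) * real (ks ! j)) / (qnum q (real (ks ! j))) ^ (s ! j))"

lemma mzv_Cons: "k # ks \<in> mzv_indices (Suc N) \<longleftrightarrow> ks \<in> mzv_indices N \<and> 0 < k \<and> (\<forall>y\<in>set ks. y < k)"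
  by (auto simp: mzv_indices_def)

lemma mzv_le_hd0: "ks \<in> mzv_indices N \<Longrightarrow> y \<in> set ks \<Longrightarrow> y \<le> hd0 ks"
  by (cases ks) (auto simp: mzv_indices_def hd0_def)

lemma mzv_0: "mzv_indices 0 = {[]}"
  by (auto simp: mzv_indices_def)

lemma Dm_0: "Dm 0 m = (if m = 0 then {[]} else {})"
  by (auto simp: Dm_def mzv_0 hd0_def)

lemma mzv_Suc_cases: "ks \<in> mzv_indices (Suc N) \<Longrightarrow> \<exists>k ks'. ks = k # ks'"
  by (cases ks) (auto simp: mzv_indices_def)

lemma Dm_Suc0: "Dm (Suc N) 0 = {}"
  by (auto simp: Dm_def hd0_def mzv_indices_def split: list.splits)

lemma Dm_Suc:
  assumes m: "m \<ge> 1"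
  shows "Dm (Suc N) m = (\<lambda>ks. m # ks) ` (\<Union>m'<m. Dm N m')"
proof (intro equalityI subsetI)
  fix ks assume ks: "ks \<in> Dm (Suc N) m"
  then have "ks \<in> mzv_indices (Suc N)" by (simp add: Dm_def)
  then obtain k ks' where e: "ks = k # ks'" using mzv_Suc_cases by blast
  with ks have k: "k = m" and ks': "ks' \<in> mzv_indices N" "\<forall>y\<in>set ks'. y < k"
    by (auto simp: Dm_def hd0_def mzv_Cons)
  have "hd0 ks' < m"
    using ks' k m by (cases ks') (auto simp: hd0_def)
  then show "ks \<in> (\<lambda>ks. m # ks) ` (\<Union>m'<m. Dm N m')"
    using e k ks' by (auto simp: Dm_def)
next
  fix ks assume "ks \<in> (\<lambda>ks. m # ks) ` (\<Union>m'<m. Dm N m')"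
  then obtain ks' m' where e: "ks = m # ks'" and m': "m' < m" and ks': "ks' \<in> mzv_indices N" "hd0 ks' = m'"
    by (auto simp: Dm_def)
  have "\<forall>y\<in>set ks'. y < m" using mzv_le_hd0[OF ks'(1)] ks'(2) m' by force
  then show "ks \<in> Dm (Suc N) m" using e ks' m by (auto simp: Dm_def mzv_Cons hd0_def)
qed

lemma Dm_finite: "finite (Dm N m)"
proof (rule finite_subset)
  show "Dm N m \<subseteq> {ks. set ks \<subseteq> {..m} \<and> length ks = N}"
    using mzv_le_hd0 by (fastforce simp: Dm_def mzv_indices_def)
  show "finite {ks. set ks \<subseteq> {..m} \<and> length ks = N}"
    by (rule finite_lists_length_eq) simp
qed

lemma prodt_Cons: "prodt q (w # s) (k # ks) =
   q powr (real (w - 1) * real k) / (qnum q (real k)) ^ w * prodt q s ks"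
  by (simp only: prodt_def length_Cons prod.lessThan_Suc_shift) simp

lemma tm_Ew:
  assumes "0 < q" "q < 1" "w \<ge> 1" "m \<ge> 1"
  shows "q powr (real (w - 1) * real m) / (qnum q (real m)) ^ w = cs.Ew q 0 w m"
proof -
  interpret cs q 0 using assms by unfold_locales auto
  have qn: "qnum q (real m) = qn m"
    using assms by (simp add: qnum_def qn_def powr_realpow)
  have e1: "real (w - 1) * real m = real ((w - 1) * m)" by simp
  have pw: "q powr (real (w - 1) * real m) = (q ^ m) ^ (w - 1)"
    by (simp only: e1 powr_realpow[OF assms(1)]) (simp add: power_mult[symmetric] mult.commute)
  have qpos: "qn m > 0" using qn_ge1[of m] assms by simp
  obtain v where v: "w = Suc v" using assms by (cases w) auto
  show ?thesis
    using qpos assms(4) unfolding pw qn by (simp add: Ew_def P_def S_def T_def v power_divide field_simps)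
qed

lemma B1:
  assumes q: "0 < q" "q < 1" and pos: "\<forall>w\<in>set s. w \<ge> 1"
  shows "cs.phi q 0 s m = (\<Sum>ks\<in>Dm (length s) m. prodt q s ks)"
  using pos
proof (induction s arbitrary: m)
  case Nil then show ?case
    using q by (simp add: cs.phi.simps[of q 0] cs_def Dm_0 prodt_def)
next
  case (Cons w s)
  interpret cs q 0 using q by unfold_locales auto
  show ?case
  proof (cases "m = 0")
    case True then show ?thesis by (simp add: Dm_Suc0)
  next
    case False
    then have m: "m \<ge> 1" by simp
    have w: "w \<ge> 1" using Cons.prems by simp
    have inj: "inj_on (\<lambda>ks. m # ks) (\<Union>m'<m. Dm N m')" for N by (auto simp: inj_on_def)
    have "(\<Sum>ks\<in>Dm (length (w # s)) m. prodt q (w # s) ks)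
        = (\<Sum>ks\<in>(\<Union>m'<m. Dm (length s) m'). prodt q (w # s) (m # ks))"
      using Dm_Suc[OF m, of "length s"] by (simp add: sum.reindex[OF inj])
    also have "\<dots> = Ew w m * (\<Sum>ks\<in>(\<Union>m'<m. Dm (length s) m'). prodt q s ks)"
      by (simp only: prodt_Cons tm_Ew[OF q w m] sum_distrib_left)
    also have "(\<Sum>ks\<in>(\<Union>m'<m. Dm (length s) m'). prodt q s ks)
        = (\<Sum>m'<m. \<Sum>ks\<in>Dm (length s) m'. prodt q s ks)"
      using Dm_finite by (intro sum.UNION_disjoint) (auto simp: Dm_def)
    also have "\<dots> = (\<Sum>m'<m. phi s m')"
      using Cons.IH Cons.prems by simp
    finally show ?thesis using False by simp
  qed
qed


lemma has_sum_exhaust: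
  fixes f :: "'a \<Rightarrow> real"
  assumes nn: "\<And>a. a \<in> A \<Longrightarrow> f a \<ge> 0"
    and fin: "\<And>M. finite (B M)" and sub: "\<And>M. B M \<subseteq> A" and inc: "\<And>M. B M \<subseteq> B (Suc M)"
    and cov: "\<And>G. finite G \<Longrightarrow> G \<subseteq> A \<Longrightarrow> \<exists>M. G \<subseteq> B M"
    and lim: "(\<lambda>M. sum f (B M)) \<longlonglongrightarrow> L"
  shows "(f has_sum L) A"
proof -
  have incs: "incseq (\<lambda>M. sum f (B M))"
  proof (rule incseq_SucI)
    fix M show "sum f (B M) \<le> sum f (B (Suc M))"
      by (rule sum_mono2[OF fin inc]) (use sub nn in blast)
  qed
  have leL: "sum f (B M) \<le> L" for M
    using incs lim by (rule incseq_le)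
  have leG: "sum f G \<le> L" if "finite G" "G \<subseteq> A" for G
  proof -
    from cov[OF that] obtain M where "G \<subseteq> B M" by blast
    then have "sum f G \<le> sum f (B M)" by (rule sum_mono2[OF fin]) (use sub nn in blast)
    then show ?thesis using leL[of M] by simp
  qed
  have bdd: "bdd_above (sum f ` {F. F \<subseteq> A \<and> finite F})"
    using leG by (auto simp: bdd_above_def)
  have hs: "(f has_sum (SUP F\<in>{F. finite F \<and> F \<subseteq> A}. sum f F)) A"
    by (rule nonneg_bdd_above_has_sum[OF nn bdd])
  have ne: "{F. finite F \<and> F \<subseteq> A} \<noteq> {}" by auto
  have bdd': "bdd_above (sum f ` {F. finite F \<and> F \<subseteq> A})"
    using bdd by (simp add: conj_commute)
  have "(SUP F\<in>{F. finite F \<and> F \<subseteq> A}. sum f F) = L"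
  proof (rule antisym)
    show "(SUP F\<in>{F. finite F \<and> F \<subseteq> A}. sum f F) \<le> L"
      using ne leG by (intro cSUP_least) auto
    show "L \<le> (SUP F\<in>{F. finite F \<and> F \<subseteq> A}. sum f F)"
    proof (rule LIMSEQ_le_const2[OF lim], intro exI allI impI)
      fix M
      show "sum f (B M) \<le> (SUP F\<in>{F. finite F \<and> F \<subseteq> A}. sum f F)"
        using fin sub by (intro cSUP_upper[OF _ bdd']) auto
    qed
  qed
  with hs show ?thesis by simp
qed

lemma B2:
  assumes q: "0 < q" "q < 1" and pos: "\<forall>w\<in>set s. w \<ge> 1"
    and sm: "summable (cs.phi q 0 s)"
  shows "qzeta q s = suminf (cs.phi q 0 s)"
proof -
  interpret cs q 0 using q by unfold_locales auto
  define B where "B M = (\<Union>m<M. Dm (length s) m)" for M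
  have hs: "(prodt q s has_sum suminf (phi s)) (mzv_indices (length s))"
  proof (rule has_sum_exhaust)
    fix ks assume "ks \<in> mzv_indices (length s)"
    show "prodt q s ks \<ge> 0"
      unfolding prodt_def qnum_def using q
      by (intro prod_nonneg divide_nonneg_nonneg zero_le_power) (auto simp: powr_realpow power_le_one)
  next
    fix M show "finite (B M)" by (simp add: B_def Dm_finite)
  next
    fix M show "B M \<subseteq> mzv_indices (length s)" by (auto simp: B_def Dm_def)
  next
    fix M show "B M \<subseteq> B (Suc M)" unfolding B_def by (intro UN_mono) auto
  next
    fix G assume G: "finite G" "G \<subseteq> mzv_indices (length s)"
    define M where "M = Suc (Max (hd0 ` G))"
    have "G \<subseteq> B M"
    proof
      fix ks assume ks: "ks \<in> G"
      then have hk: "hd0 ks < M" using G by (simp add: M_def le_imp_less_Suc)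
      show "ks \<in> B M" using ks G hk unfolding B_def Dm_def by blast
    qed
    then show "\<exists>M. G \<subseteq> B M" by blast
  next
    have "sum (prodt q s) (B M) = (\<Sum>m<M. phi s m)" for M
    proof -
      have "sum (prodt q s) (B M) = (\<Sum>m<M. \<Sum>ks\<in>Dm (length s) m. prodt q s ks)"
        unfolding B_def using Dm_finite by (intro sum.UNION_disjoint) (auto simp: Dm_def)
      also have "\<dots> = (\<Sum>m<M. phi s m)" using B1[OF q pos] by simp
      finally show ?thesis .
    qed
    then show "(\<lambda>M. sum (prodt q s) (B M)) \<longlonglongrightarrow> suminf (phi s)"
      using summable_LIMSEQ[OF sm] by simp
  qed
  have "qzeta q s = infsum (prodt q s) (mzv_indices (length s))"
    unfolding qzeta_def prodt_def by (rule refl)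
  also have "\<dots> = suminf (phi s)" using hs by (rule infsumI)
  finally show ?thesis .
qed


definition Lc :: "nat \<Rightarrow> nat \<Rightarrow> nat list set" where
  "Lc N M = {cs. length cs = N \<and> sum_list cs = M}"

definition psi :: "real \<Rightarrow> nat list \<Rightarrow> nat \<Rightarrow> nat \<Rightarrow> real" where
  "psi q s M m = (\<Sum>c\<in>Lc (length s) M. cs.phi q 0 (map2 (+) s c) m)"

lemma Lc_finite: "finite (Lc N M)"
proof (rule finite_subset)
  show "Lc N M \<subseteq> {cs. set cs \<subseteq> {..M} \<and> length cs = N}"
    by (auto simp: Lc_def member_le_sum_list)
  show "finite {cs. set cs \<subseteq> {..M} \<and> length cs = N}"
    by (rule finite_lists_length_eq) simp
qed

lemma Lc_0: "Lc 0 M = (if M = 0 then {[]} else {})"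
  by (auto simp: Lc_def)

lemma Lc_Suc: "Lc (Suc N) M = (\<Union>c0\<in>{..M}. (\<lambda>c'. c0 # c') ` Lc N (M - c0))"
proof (intro equalityI subsetI)
  fix c assume "c \<in> Lc (Suc N) M"
  then obtain c0 c' where "c = c0 # c'" "length c' = N" "c0 + sum_list c' = M"
    by (cases c) (auto simp: Lc_def)
  then have "c' \<in> Lc N (M - c0)" "c0 \<in> {..M}" "c = c0 # c'" by (auto simp: Lc_def)
  then show "c \<in> (\<Union>c0\<in>{..M}. (\<lambda>c'. c0 # c') ` Lc N (M - c0))"
    by blast
qed (auto simp: Lc_def)

lemma psi_Nil:
  assumes "0 < q" "q < 1"
  shows "psi q [] M m = (if M = 0 \<and> m = 0 then 1 else 0)"
proof -
  interpret cs q 0 using assms by unfold_locales auto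
  show ?thesis by (simp add: psi_def Lc_0)
qed

lemma psi_0:
  assumes "0 < q" "q < 1"
  shows "psi q (w # s) M 0 = 0"
proof -
  interpret cs q 0 using assms by unfold_locales auto
  show ?thesis unfolding psi_def
    by (intro sum.neutral) (auto simp: Lc_def length_Suc_conv)
qed

lemma psi_Cons:
  assumes q: "0 < q" "q < 1" and m: "m \<ge> 1"
  shows "psi q (w # s) M m = (\<Sum>c0\<le>M. cs.Ew q 0 (w + c0) m * (\<Sum>m'<m. psi q s (M - c0) m'))"
proof -
  interpret cs q 0 using q by unfold_locales auto
  have inj: "inj_on (\<lambda>c'. c0 # c') A" for c0 :: nat and A by (auto simp: inj_on_def)
  have "psi q (w # s) M m = (\<Sum>c0\<le>M. \<Sum>c\<in>(\<lambda>c'. c0 # c') ` Lc (length s) (M - c0). phi (map2 (+) (w # s) c) m)"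
    unfolding psi_def length_Cons Lc_Suc
    by (rule sum.UNION_disjoint) (auto simp: Lc_finite)
  also have "\<dots> = (\<Sum>c0\<le>M. \<Sum>c'\<in>Lc (length s) (M - c0). phi ((w + c0) # map2 (+) s c') m)"
    by (simp add: sum.reindex[OF inj])
  also have "\<dots> = (\<Sum>c0\<le>M. \<Sum>c'\<in>Lc (length s) (M - c0). Ew (w + c0) m * (\<Sum>m'<m. phi (map2 (+) s c') m'))"
    using m by simp
  also have "\<dots> = (\<Sum>c0\<le>M. Ew (w + c0) m * (\<Sum>m'<m. psi q s (M - c0) m'))"
  proof (rule sum.cong[OF refl])
    fix c0
    have "(\<Sum>c'\<in>Lc (length s) (M - c0). Ew (w + c0) m * (\<Sum>m'<m. phi (map2 (+) s c') m'))
       = Ew (w + c0) m * (\<Sum>c'\<in>Lc (length s) (M - c0). \<Sum>m'<m. phi (map2 (+) s c') m')"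
      by (simp add: sum_distrib_left)
    also have "(\<Sum>c'\<in>Lc (length s) (M - c0). \<Sum>m'<m. phi (map2 (+) s c') m')
       = (\<Sum>m'<m. \<Sum>c'\<in>Lc (length s) (M - c0). phi (map2 (+) s c') m')"
      by (rule sum.swap)
    finally show "(\<Sum>c'\<in>Lc (length s) (M - c0). Ew (w + c0) m * (\<Sum>m'<m. phi (map2 (+) s c') m'))
       = Ew (w + c0) m * (\<Sum>m'<m. psi q s (M - c0) m')"
      by (simp add: psi_def)
  qed
  finally show ?thesis .
qed

lemma Ew_geom:
  assumes q: "0 < q" "q < 1" and x: "0 \<le> x" "x \<le> 1" and w: "w \<ge> 1" and m: "m \<ge> 1"
  shows "(\<lambda>c. x ^ c * cs.Ew q 0 (w + c) m) sums cs.Ew q x w m"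
proof -
  interpret A0: cs q 0 using q by unfold_locales auto
  interpret Ax: cs q x using q x by unfold_locales auto
  have qnp: "A0.qn m > 0" using A0.qn_ge1[OF m] by simp
  have P0: "A0.P m \<ge> 0" by (rule A0.P_nonneg)
  have xP: "x * A0.P m < 1"
  proof -
    have "x * A0.P m \<le> A0.P m" using x P0 by (intro mult_left_le_one_le)
    also have "\<dots> \<le> q^m" by (rule A0.P_le)
    also have "\<dots> \<le> q" by (rule A0.qpow_le[OF m])
    finally show ?thesis using q by linarith
  qed
  have xP0: "x * A0.P m \<ge> 0" using x(1) P0 by (rule mult_nonneg_nonneg)
  have e: "x ^ c * A0.Ew (w + c) m = A0.Ew w m * (x * A0.P m) ^ c" for c
  proof -
    have "w + c - 1 = (w - 1) + c" using w by simp
    then have "A0.P m ^ (w + c - 1) = A0.P m ^ (w - 1) * A0.P m ^ c" by (simp only: power_add)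
    then show ?thesis unfolding A0.Ew_def power_mult_distrib by (simp only: ac_simps)
  qed
  have "(\<lambda>c. A0.Ew w m * (x * A0.P m) ^ c) sums (A0.Ew w m * (1 / (1 - x * A0.P m)))"
    by (rule sums_mult, rule geometric_sums) (use xP xP0 in simp)
  moreover have "A0.Ew w m * (1 / (1 - x * A0.P m)) = Ax.Ew w m"
  proof -
    have TT: "Ax.T m = A0.qn m - x * q^m" by (simp only: Ax.T_def)
    have "Ax.T m / A0.qn m = 1 - x * A0.P m"
      using qnp unfolding TT A0.P_def by (simp add: diff_divide_distrib)
    moreover have "Ax.T m > 0" using Ax.T_pos[OF m] .
    moreover have T0: "A0.T m = A0.qn m" by (simp only: A0.T_def mult_zero_left diff_zero)
    ultimately show ?thesis using m qnp
      unfolding A0.Ew_def Ax.Ew_def A0.S_def Ax.S_def T0 by (simp add: field_simps)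
  qed
  ultimately show ?thesis by (simp only: e)
qed

lemma B3:
  assumes q: "0 < q" "q < 1" and x: "0 \<le> x" "x \<le> 1" and pos: "\<forall>w\<in>set s. w \<ge> 1"
  shows "(\<lambda>M. x ^ M * psi q s M m) sums cs.phi q x s m"
  using pos
proof (induction s arbitrary: m)
  case Nil
  interpret Ax: cs q x using q x by unfold_locales auto
  have "(\<lambda>M. x ^ M * psi q [] M m) = (\<lambda>M. if M = 0 then Ax.phi [] m else 0)"
    by (auto simp: fun_eq_iff psi_Nil[OF q])
  then show ?case using sums_single[of 0 "\<lambda>_. Ax.phi [] m"] by simp
next
  case (Cons w s)
  interpret A0: cs q 0 using q by unfold_locales auto
  interpret Ax: cs q x using q x by unfold_locales auto
  have w: "w \<ge> 1" using Cons.prems by simp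
  have IH: "(\<lambda>M. x ^ M * psi q s M m') sums Ax.phi s m'" for m'
    using Cons.IH Cons.prems by simp
  show ?case
  proof (cases "m = 0")
    case True
    then show ?thesis by (simp add: psi_0[OF q])
  next
    case False
    then have m: "m \<ge> 1" by simp
    define a where "a c = x ^ c * A0.Ew (w + c) m" for c
    define b where "b M = x ^ M * (\<Sum>m'<m. psi q s M m')" for M
    have sa: "a sums Ax.Ew w m" unfolding a_def by (rule Ew_geom[OF q x w m])
    have sb: "b sums (\<Sum>m'<m. Ax.phi s m')"
      unfolding b_def sum_distrib_left by (rule sums_sum) (rule IH)
    have a_nn: "a c \<ge> 0" for c unfolding a_def using x by (simp add: A0.Ew_nonneg)
    have psi_nn: "psi q s M m' \<ge> 0" for M m' unfolding psi_def by (intro sum_nonneg A0.phi_nonneg)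
    have b_nn: "b M \<ge> 0" for M unfolding b_def using x psi_nn by (simp add: sum_nonneg)
    have "(\<lambda>k. \<Sum>i\<le>k. a i * b (k - i)) sums (suminf a * suminf b)"
    proof (rule Cauchy_product_sums)
      show "summable (\<lambda>k. norm (a k))" using sa a_nn by (simp add: sums_summable)
      show "summable (\<lambda>k. norm (b k))" using sb b_nn by (simp add: sums_summable)
    qed
    moreover have "suminf a * suminf b = Ax.phi (w # s) m"
      using sa sb m by (simp add: sums_iff)
    moreover have "(\<Sum>i\<le>k. a i * b (k - i)) = x ^ k * psi q (w # s) k m" for k
    proof -
      have "(\<Sum>i\<le>k. a i * b (k - i)) = (\<Sum>i\<le>k. x ^ k * (A0.Ew (w + i) m * (\<Sum>m'<m. psi q s (k - i) m')))"
      proof (rule sum.cong[OF refl])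
        fix i assume "i \<in> {..k}"
        then have "x ^ i * x ^ (k - i) = x ^ k" by (simp add: power_add[symmetric])
        then show "a i * b (k - i) = x ^ k * (A0.Ew (w + i) m * (\<Sum>m'<m. psi q s (k - i) m'))"
          unfolding a_def b_def by (metis (no_types, lifting) mult.assoc mult.left_commute)
      qed
      also have "\<dots> = x ^ k * psi q (w # s) k m"
        by (simp add: psi_Cons[OF q m] sum_distrib_left)
      finally show ?thesis .
    qed
    ultimately show ?thesis by simp
  qed
qed


lemma summable_poly_geom:
  assumes r: "0 < r" "r < 1"
  shows "summable (\<lambda>m. real m ^ N * r ^ m)"
proof -
  define c where "c = (1 + r) / 2"
  have c1: "c < 1" using r by (simp add: c_def)
  have cr: "1 < c / r" using r by (simp add: c_def field_simps)
  have "(\<lambda>m. (1 + 1 / real m) ^ N) \<longlonglongrightarrow> (1 + 0) ^ N"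
    by (intro tendsto_power tendsto_add tendsto_const lim_inverse_n')
  then have "eventually (\<lambda>m. (1 + 1 / real m) ^ N < c / r) sequentially"
    using cr by (intro order_tendstoD(2)) auto
  then obtain N0 where N0: "\<And>m. m \<ge> N0 \<Longrightarrow> (1 + 1 / real m) ^ N < c / r"
    by (auto simp: eventually_sequentially)
  show ?thesis
  proof (rule summable_ratio_test[OF c1, of "max N0 1"])
    fix m assume m: "m \<ge> max N0 1"
    then have m1: "real m \<ge> 1" and mN: "m \<ge> N0" by auto
    have e: "real (Suc m) = real m * (1 + 1 / real m)" using m1 by (simp add: field_simps)
    have "real (Suc m) ^ N * r ^ Suc m = (1 + 1 / real m) ^ N * r * (real m ^ N * r ^ m)"
      by (subst e) (simp add: power_mult_distrib)
    then have "norm (real (Suc m) ^ N * r ^ Suc m) = (1 + 1 / real m) ^ N * r * (real m ^ N * r ^ m)"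
      using r by simp
    also have "\<dots> \<le> (c / r) * r * (real m ^ N * r ^ m)"
      using N0[OF mN] r by (intro mult_right_mono) auto
    also have "\<dots> = c * norm (real m ^ N * r ^ m)" using r by simp
    finally show "norm (real (Suc m) ^ N * r ^ Suc m) \<le> c * norm (real m ^ N * r ^ m)" .
  qed
qed

context cs
begin

definition K :: real where "K = 1 / (1 - q)"

lemma K_ge1: "K \<ge> 1"
  using q0 q1 by (simp add: K_def)

lemma Ew_le: "Ew w k \<le> K"
proof -
  have "P k ^ (w - 1) \<le> 1" using P_nonneg P_le1 by (rule power_le_one)
  then have "P k ^ (w - 1) * S k \<le> 1 * K"
    using S_le[of k] S_nonneg[of k] K_ge1 by (intro mult_mono) (auto simp: K_def)
  then show ?thesis by (simp add: Ew_def)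
qed

lemma Ew_le2: "w \<ge> 2 \<Longrightarrow> Ew w k \<le> q ^ k * K"
proof -
  assume w: "w \<ge> 2"
  have "P k ^ (w - 1) \<le> P k ^ 1" using P_nonneg P_le1 w by (intro power_decreasing) auto
  also have "\<dots> \<le> q ^ k" using P_le by simp
  finally have "P k ^ (w - 1) * S k \<le> q ^ k * K"
    using S_le[of k] S_nonneg[of k] q0 by (intro mult_mono) (auto simp: K_def)
  then show ?thesis by (simp add: Ew_def)
qed

lemma A_bound: "(\<Sum>m'<m. phi s m') \<le> (K * real m) ^ length s"
proof (induction s arbitrary: m)
  case Nil
  have "(\<Sum>m'<m. phi [] m') = (\<Sum>m'\<in>{..<m} \<inter> {0}. 1)"
    by (rule sum.inter_restrict[symmetric, where A = "{..<m}" and B = "{0}" and g = "\<lambda>_. (1::real)", THEN trans[rotated]]) (auto simp: indicator_def intro!: sum.cong)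
  also have "\<dots> \<le> 1" by (cases m) auto
  finally show ?case by simp
next
  case (Cons w s)
  have "(\<Sum>m'<m. phi (w # s) m') \<le> (\<Sum>m'<m. K * (K * real m) ^ length s)"
  proof (rule sum_mono)
    fix m' assume "m' \<in> {..<m}"
    then have mm: "m' \<le> m" by simp
    have "phi (w # s) m' \<le> K * (\<Sum>m''<m'. phi s m'')"
      using Ew_le[of w m'] K_ge1 by (auto intro!: mult_right_mono sum_nonneg phi_nonneg)
    also have "\<dots> \<le> K * (K * real m') ^ length s"
      using Cons.IH[of m'] K_ge1 by (intro mult_left_mono) auto
    also have "\<dots> \<le> K * (K * real m) ^ length s"
      using K_ge1 mm by (intro mult_left_mono power_mono) auto
    finally show "phi (w # s) m' \<le> K * (K * real m) ^ length s" .
  qed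
  also have "\<dots> = (K * real m) ^ length (w # s)" by simp
  finally show ?case .
qed

lemma phi_bound: "w \<ge> 2 \<Longrightarrow> phi (w # s) m \<le> K ^ Suc (length s) * (real m ^ length s * q ^ m)"
proof -
  assume w: "w \<ge> 2"
  have "phi (w # s) m \<le> (q ^ m * K) * (K * real m) ^ length s"
    using Ew_le2[OF w, of m] A_bound[of s m] Ew_nonneg[of w m]
    by (auto intro!: mult_mono sum_nonneg phi_nonneg)
  also have "\<dots> = K ^ Suc (length s) * (real m ^ length s * q ^ m)"
    by (simp add: power_mult_distrib)
  finally show ?thesis .
qed

lemma phi_summable: "w \<ge> 2 \<Longrightarrow> summable (phi (w # s))"
proof -
  assume w: "w \<ge> 2"
  show ?thesis
  proof (rule summable_comparison_test)
    show "\<exists>N. \<forall>n\<ge>N. norm (phi (w # s) n) \<le> K ^ Suc (length s) * (real n ^ length s * q ^ n)"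
      unfolding real_norm_def abs_of_nonneg[OF phi_nonneg] using phi_bound[OF w] by blast
    show "summable (\<lambda>n. K ^ Suc (length s) * (real n ^ length s * q ^ n))"
      by (intro summable_mult summable_poly_geom q0 q1)
  qed
qed

end


lemma powser_unique:
  fixes a b :: "nat \<Rightarrow> real"
  assumes h: "\<And>x. 0 < x \<Longrightarrow> x < 1 \<Longrightarrow>
     summable (\<lambda>n. a n * x ^ n) \<and> summable (\<lambda>n. b n * x ^ n) \<and> (\<Sum>n. a n * x ^ n) = (\<Sum>n. b n * x ^ n)"
  shows "a M = b M"
proof -
  define d where "d n = a n - b n" for n
  have ds: "(\<lambda>n. d n * x ^ n) sums 0" if "0 < x" "x < 1" for x
  proof -
    from h[OF that] have "(\<lambda>n. a n * x ^ n - b n * x ^ n) sums ((\<Sum>n. a n * x ^ n) - (\<Sum>n. b n * x ^ n))"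
      by (intro sums_diff summable_sums) auto
    then show ?thesis using h[OF that] by (simp add: d_def left_diff_distrib)
  qed
  have "d M = 0"
  proof (induction M rule: less_induct)
    case (less M)
    define e where "e n = d (n + M)" for n
    have es: "(\<lambda>n. e n * y ^ n) sums 0" if y: "0 < y" "y < 1" for y
    proof -
      have "(\<lambda>n. d (n + M) * y ^ (n + M)) sums (0 - (\<Sum>i<M. d i * y ^ i))"
        using sums_split_initial_segment[OF ds[OF y], of M] by simp
      also have "(\<Sum>i<M. d i * y ^ i) = 0" using less by simp
      finally have "(\<lambda>n. y ^ M * (e n * y ^ n)) sums (y ^ M * 0)"
        by (simp add: e_def power_add mult_ac)
      then show ?thesis using y by (subst (asm) sums_mult_iff) auto
    qed
    define g where "g y = (\<Sum>n. e n * y ^ n)" for y :: real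
    have "isCont g 0"
      unfolding g_def by (rule isCont_powser[of _ "1/2"]) (use es[of "1/2"] in \<open>auto simp: sums_iff\<close>)
    then have l1: "(g \<longlongrightarrow> g 0) (at_right 0)"
      by (simp add: isCont_def filterlim_at_split)
    have g0: "g y = 0" if "0 < y" "y < 1" for y
      using sums_unique[OF es[OF that]] by (simp add: g_def)
    have "eventually (\<lambda>y. g y = 0) (at_right (0::real))"
      unfolding eventually_at_right_field
      by (intro exI[of _ 1]) (auto intro: g0)
    then have l2: "(g \<longlongrightarrow> 0) (at_right 0)" by (rule tendsto_eventually)
    have "g 0 = 0" using tendsto_unique[OF _ l1 l2] by simp
    moreover have "g 0 = e 0" unfolding g_def using powser_zero[of e] by simp
    ultimately show ?case by (simp add: e_def)
  qed
  then show ?thesis by (simp add: d_def)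
qed

lemma set_map2_pos: "\<forall>w\<in>set p. w \<ge> (1::nat) \<Longrightarrow> \<forall>y\<in>set (map2 (+) p c). y \<ge> 1"
  by (auto simp: set_zip intro: trans_le_add1)

lemma gen_eq:
  assumes q: "0 < q" "q < 1" and x: "0 < x" "x \<le> 1" and pos: "\<forall>w\<in>set p. w \<ge> 1"
    and p: "p = w # s" "w \<ge> 2"
  shows "(\<Sum>M. ennreal (x ^ M * qZ q p M)) = (\<Sum>m. ennreal (cs.phi q x p m))"
    and "qZ q p M \<ge> 0"
proof -
  interpret A0: cs q 0 using q by unfold_locales auto
  interpret Ax: cs q x using q x by unfold_locales auto
  have smx: "summable (Ax.phi p)" using Ax.phi_summable[OF p(2)] p(1) by simp
  have psi_nn: "psi q p M m \<ge> 0" for M m unfolding psi_def by (intro sum_nonneg A0.phi_nonneg)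
  have B3p: "(\<lambda>M. x ^ M * psi q p M m) sums Ax.phi p m" for m
    using B3[OF q _ _ pos] x by simp
  have sm_c: "summable (A0.phi (map2 (+) p c))" if c: "c \<in> Lc (length p) M" for c M
  proof (rule summable_comparison_test)
    show "summable (\<lambda>m. Ax.phi p m / x ^ M)" using smx by (rule summable_divide)
    show "\<exists>N. \<forall>m\<ge>N. norm (A0.phi (map2 (+) p c) m) \<le> Ax.phi p m / x ^ M"
    proof (intro exI[of _ 0] allI impI)
      fix m :: nat
      have "A0.phi (map2 (+) p c) m \<le> psi q p M m"
        unfolding psi_def using c Lc_finite by (intro member_le_sum A0.phi_nonneg) auto
      moreover have "x ^ M * psi q p M m \<le> Ax.phi p m"
      proof -
        have "sum (\<lambda>M. x ^ M * psi q p M m) {M} \<le> suminf (\<lambda>M. x ^ M * psi q p M m)"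
          using B3p[of m] x psi_nn by (intro sum_le_suminf) (auto simp: sums_iff)
        then show ?thesis using B3p[of m] by (simp add: sums_iff)
      qed
      ultimately have "x ^ M * A0.phi (map2 (+) p c) m \<le> Ax.phi p m"
        using x by (meson mult_left_mono order_trans zero_le_power less_imp_le)
      then show "norm (A0.phi (map2 (+) p c) m) \<le> Ax.phi p m / x ^ M"
        using x A0.phi_nonneg by (simp add: field_simps)
    qed
  qed
  have qZ_sums: "(\<lambda>m. psi q p M m) sums qZ q p M" for M
  proof -
    have "qZ q p M = (\<Sum>c\<in>Lc (length p) M. qzeta q (map2 (+) p c))"
      by (simp add: qZ_def Lc_def)
    also have "\<dots> = (\<Sum>c\<in>Lc (length p) M. suminf (A0.phi (map2 (+) p c)))"
      by (intro sum.cong refl B2[OF q set_map2_pos[OF pos] sm_c])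
    also have "\<dots> = (\<Sum>m. \<Sum>c\<in>Lc (length p) M. A0.phi (map2 (+) p c) m)"
      by (rule suminf_sum[symmetric]) (rule sm_c)
    finally have e: "qZ q p M = (\<Sum>m. psi q p M m)" by (simp add: psi_def)
    have "summable (\<lambda>m. psi q p M m)"
      unfolding psi_def by (intro summable_sum sm_c)
    then show ?thesis using e by (simp add: sums_iff)
  qed
  show "qZ q p M \<ge> 0" using qZ_sums[of M] psi_nn by (metis sums_iff suminf_nonneg)
  have "ennreal (x ^ M * qZ q p M) = (\<Sum>m. ennreal (x ^ M * psi q p M m))" for M
    using x psi_nn by (intro suminf_ennreal_eq[symmetric] sums_mult qZ_sums) auto
  then have "(\<Sum>M. ennreal (x ^ M * qZ q p M)) = (\<Sum>M. \<Sum>m. ennreal (x ^ M * psi q p M m))"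
    by simp
  also have "\<dots> = (\<Sum>m. \<Sum>M. ennreal (x ^ M * psi q p M m))" by (rule ennreal_suminf_swap)
  also have "\<dots> = (\<Sum>m. ennreal (Ax.phi p m))"
    using x psi_nn by (subst suminf_ennreal_eq[OF _ B3p]) auto
  finally show "(\<Sum>M. ennreal (x ^ M * qZ q p M)) = (\<Sum>m. ennreal (Ax.phi p m))" .
qed


lemma dual_args_pos: "\<forall>w\<in>set (dual_args as bs). w \<ge> 1"
  by (auto simp: dual_args_def)

lemma dual_args_head:
  assumes "as \<noteq> []" "length as = length bs"
  shows "\<exists>w s. dual_args as bs = w # s \<and> w \<ge> 2"
  using assms by (cases as; cases bs) (auto simp: dual_args_def)

lemma gen_final:
  assumes q: "0 < q" "q < 1" and x: "0 < x" "x \<le> 1"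
    and pos: "\<forall>w\<in>set p. w \<ge> 1" and p: "p = w # s" "w \<ge> 2"
  shows "summable (\<lambda>M. x ^ M * qZ q p M)"
    and "(\<Sum>M. ennreal (x ^ M * qZ q p M)) = ennreal (\<Sum>M. x ^ M * qZ q p M)"
proof -
  interpret Ax: cs q x using q x by unfold_locales auto
  have smx: "summable (Ax.phi p)" using Ax.phi_summable[OF p(2)] p(1) by simp
  have nt: "(\<Sum>m. ennreal (Ax.phi p m)) \<noteq> top"
    by (rule ennreal_suminf_neq_top[OF smx Ax.phi_nonneg])
  have nn: "x ^ M * qZ q p M \<ge> 0" for M
    using gen_eq(2)[OF q x pos p] x by simp
  have nt2: "(\<Sum>M. ennreal (x ^ M * qZ q p M)) \<noteq> top"
    using nt gen_eq(1)[OF q x pos p] by simp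
  show "summable (\<lambda>M. x ^ M * qZ q p M)"
    by (rule summable_suminf_not_top[OF nn nt2])
  show "(\<Sum>M. ennreal (x ^ M * qZ q p M)) = ennreal (\<Sum>M. x ^ M * qZ q p M)"
    by (rule suminf_ennreal[OF nn nt2])
qed

theorem theorem3p1:
  fixes q :: real and n :: nat and as bs :: "nat list" and m :: nat
  assumes "0 < q" "q < 1" "n \<ge> 1" "length as = n" "length bs = n"
  shows "qZ q (dual_args as bs) m = qZ q (dual_args (rev bs) (rev as)) m"
proof -
  define p where "p = dual_args as bs"
  define p' where "p' = dual_args (rev bs) (rev as)"
  have q: "0 < q" "q < 1" using assms by auto
  have len: "length as = length bs" using assms by simp
  have ne: "as \<noteq> []" "rev bs \<noteq> []" using assms by auto
  obtain w s where ws: "p = w # s" "w \<ge> 2" using dual_args_head[OF ne(1) len] p_def by blast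
  obtain w' s' where ws': "p' = w' # s'" "w' \<ge> 2"
    using dual_args_head[OF ne(2), of "rev as"] len p'_def by auto
  have pos: "\<forall>w\<in>set p. w \<ge> 1" "\<forall>w\<in>set p'. w \<ge> 1"
    unfolding p_def p'_def by (rule dual_args_pos)+
  have "qZ q p m = qZ q p' m"
  proof (rule powser_unique)
    fix x :: real assume x: "0 < x" "x < 1"
    then have x': "0 < x" "x \<le> 1" by auto
    interpret Ax: cs q x using q x by unfold_locales auto
    have G: "(\<Sum>m. ennreal (Ax.phi p m)) = (\<Sum>m. ennreal (Ax.phi p' m))"
      unfolding p_def p'_def by (rule Ax.Gen_dual[OF len])
    have s1: "summable (\<lambda>M. x ^ M * qZ q p M)" by (rule gen_final(1)[OF q x' pos(1) ws])
    have s2: "summable (\<lambda>M. x ^ M * qZ q p' M)" by (rule gen_final(1)[OF q x' pos(2) ws'])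
    have "ennreal (\<Sum>M. x ^ M * qZ q p M) = ennreal (\<Sum>M. x ^ M * qZ q p' M)"
      using gen_final(2)[OF q x' pos(1) ws] gen_final(2)[OF q x' pos(2) ws']
        gen_eq(1)[OF q x' pos(1) ws] gen_eq(1)[OF q x' pos(2) ws'] G by simp
    moreover have "(\<Sum>M. x ^ M * qZ q p M) \<ge> 0" "(\<Sum>M. x ^ M * qZ q p' M) \<ge> 0"
      using s1 s2 gen_eq(2)[OF q x' pos(1) ws] gen_eq(2)[OF q x' pos(2) ws'] x
      by (auto intro!: suminf_nonneg)
    ultimately have "(\<Sum>M. x ^ M * qZ q p M) = (\<Sum>M. x ^ M * qZ q p' M)" by simp
    then show "summable (\<lambda>n. qZ q p n * x ^ n) \<and> summable (\<lambda>n. qZ q p' n * x ^ n) \<and>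
        (\<Sum>n. qZ q p n * x ^ n) = (\<Sum>n. qZ q p' n * x ^ n)"
      using s1 s2 by (simp add: mult.commute)
  qed
  then show ?thesis by (simp add: p_def p'_def)
qed

end
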